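(* Let $G=(V,E)$ be a simple graph with $n$ vertices, $m$ edges, maximum degree $\Delta$ and arboricity $\alpha$, and let $\frac{1}{\alpha}\leq\varepsilon<1$. Procedure Arboricity Edge-Coloring with parameter $h=\max\{\lfloor\log(\varepsilon\alpha/3)\rfloor,0\}$ computes a proper edge-coloring of $G$ using at most $\Delta+\varepsilon\alpha$ colors in $O\left(\frac{m\log n}{\varepsilon^{7}}\right)$ deterministic time. Its randomized version requires $O\left(\frac{m\log n}{\varepsilon}\right)$ expected time.
   Context: Logarithms are base 2. The arboricity of $G$ is $\alpha(G)=\max_{S\subseteq V,|S|\ge2}\lceil |E(G[S])|/(|S|-1)\rceil$. A proper $k$-edge-coloring is a map $\varphi:E\to\{1,\dots,k\}$ assigning distinct colors to distinct edges sharing an endpoint. An orientation $\mu$ assigns a direction to each edge; $\mathrm{indeg}(v)$, $\mathrm{outdeg}(v)$ are the in/out-degrees. An oriented degree-splitting of $(G,\mu)$ with discrepancy $\kappa$ is a partition $(E_1,E_2)$ of $E$ such that for every vertex $v$, the numbers of incoming edges of $v$ in $E_1$ and in $E_2$ differ by at most $\kappa$, and the numbers of outgoing edges of $v$ in $E_1$ and in $E_2$ differ by at most $\kappa$. Procedure Forests-Decomposition Orientation$(G)$: starting from $\mathcal A=V$, repeatedly pick $v\in\mathcal A$ of minimum degree in $G[\mathcal A]$, orient every edge from $v$ to its neighbours in $\mathcal A$, and remove $v$ from $\mathcal A$, until $\mathcal A=\emptyset$. Procedure Oriented Edge-Coloring$(G,\mu,h)$: if $h=0$, return a proper $(\Delta(G)+1)$-edge-coloring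 of (the undirected) $G$ computed by a base-case subroutine. Otherwise compute an oriented degree-splitting $(E_1,E_2)$ of $(G,\mu)$ with discrepancy at most 1 (computable in $O(|E|)$ time), let $G_1=(V,E_1)$, $G_2=(V,E_2)$ with the orientation induced by $\mu$, recursively compute $\varphi_1=$ Oriented Edge-Coloring$(G_1,\mu,h-1)$, $\varphi_2=$ Oriented Edge-Coloring$(G_2,\mu,h-1)$, and return $\varphi(e)=\varphi_1(e)$ on $E_1$ and $\varphi(e)=p_1+\varphi_2(e)$ on $E_2$, where $p_1$ is the palette size of $\varphi_1$. Procedure Arboricity Edge-Coloring$(G,h)$: compute $\mu=$ Forests-Decomposition Orientation$(G)$ and return Oriented Edge-Coloring$(G,\mu,h)$. Deterministic version: the base-case subroutine is a deterministic algorithm computing a proper $(\Delta'+1)$-edge-coloring of an $n'$-vertex $m'$-edge graph with maximum degree $\Delta'$ and arboricity $\alpha'$ in $O(m'\alpha'^7\log n')$ time. Randomized version: the base-case subroutine is a randomized algorithm computing a proper $(\Delta'+1)$-edge-coloring in expected $O(m'\alpha'\log n')$ time. *)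

theory Defs
  imports Complex_Main
begin

definition simple_graph :: "'a set \<Rightarrow> 'a set set \<Rightarrow> bool" where
  "simple_graph V E \<longleftrightarrow> finite V \<and>
     (\<forall>e\<in>E. \<exists>u v. e = {u, v} \<and> u \<noteq> v \<and> u \<in> V \<and> v \<in> V)"

definition degree :: "'a set set \<Rightarrow> 'a \<Rightarrow> nat" where
  "degree E v = card {e \<in> E. v \<in> e}"

definition max_degree :: "'a set \<Rightarrow> 'a set set \<Rightarrow> nat" where
  "max_degree V E = Max (insert 0 (degree E ` V))"

definition induced_edges :: "'a set set \<Rightarrow> 'a set \<Rightarrow> 'a set set" where
  "induced_edges E S = {e \<in> E. e \<subseteq> S}"

definition arboricity :: "'a set \<Rightarrow> 'a set set \<Rightarrow> nat" where
  "arboricity V E = Max (insert 0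
     {nat \<lceil>real (card (induced_edges E S)) / real (card S - 1)\<rceil> | S. S \<subseteq> V \<and> card S \<ge> 2})"

definition proper_edge_coloring :: "'a set set \<Rightarrow> ('a set \<Rightarrow> nat) \<Rightarrow> nat \<Rightarrow> bool" where
  "proper_edge_coloring E \<phi> k \<longleftrightarrow>
     (\<forall>e\<in>E. \<phi> e \<in> {1..k}) \<and>
     (\<forall>e1\<in>E. \<forall>e2\<in>E. e1 \<noteq> e2 \<and> e1 \<inter> e2 \<noteq> {} \<longrightarrow> \<phi> e1 \<noteq> \<phi> e2)"

definition orientation :: "'a set set \<Rightarrow> ('a \<times> 'a) set \<Rightarrow> bool" where
  "orientation E D \<longleftrightarrow> (\<forall>(u, v)\<in>D. {u, v} \<in> E) \<and>
     (\<forall>e\<in>E. \<exists>!a. a \<in> D \<and> (case a of (u, v) \<Rightarrow> {u, v} = e))"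

definition restrict_orient :: "('a \<times> 'a) set \<Rightarrow> 'a set set \<Rightarrow> ('a \<times> 'a) set" where
  "restrict_orient D E1 = {(u, v) \<in> D. {u, v} \<in> E1}"

definition indeg_in :: "('a \<times> 'a) set \<Rightarrow> 'a set set \<Rightarrow> 'a \<Rightarrow> nat" where
  "indeg_in D E1 v = card {u. (u, v) \<in> D \<and> {u, v} \<in> E1}"

definition outdeg_in :: "('a \<times> 'a) set \<Rightarrow> 'a set set \<Rightarrow> 'a \<Rightarrow> nat" where
  "outdeg_in D E1 v = card {w. (v, w) \<in> D \<and> {v, w} \<in> E1}"

definition oriented_splitting ::
  "'a set \<Rightarrow> 'a set set \<Rightarrow> ('a \<times> 'a) set \<Rightarrow> 'a set set \<Rightarrow> 'a set set \<Rightarrow> nat \<Rightarrow> bool" where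
  "oriented_splitting V E D E1 E2 \<kappa> \<longleftrightarrow>
     E1 \<union> E2 = E \<and> E1 \<inter> E2 = {} \<and>
     (\<forall>v\<in>V. \<bar>int (indeg_in D E1 v) - int (indeg_in D E2 v)\<bar> \<le> int \<kappa> \<and>
             \<bar>int (outdeg_in D E1 v) - int (outdeg_in D E2 v)\<bar> \<le> int \<kappa>)"

text \<open>Possible outputs: vs lists V in the order of removal; each removed vertex has
  minimum degree in the graph induced by the remaining set; edges oriented from earlier
  removed to later removed vertex.\<close>
definition forests_decomposition_orientation ::
  "'a set \<Rightarrow> 'a set set \<Rightarrow> ('a \<times> 'a) set \<Rightarrow> bool" where
  "forests_decomposition_orientation V E D \<longleftrightarrow>
     (\<exists>vs. distinct vs \<and> set vs = V \<and>
        (\<forall>i < length vs. \<forall>u \<in> set (drop i vs).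
           degree (induced_edges E (set (drop i vs))) (vs ! i)
             \<le> degree (induced_edges E (set (drop i vs))) u) \<and>
        D = {(vs ! i, vs ! j) | i j. i < j \<and> j < length vs \<and> {vs ! i, vs ! j} \<in> E})"

text \<open>oriented_edge_coloring Bnd cs V E D h \<phi> p t: \<phi> is a possible output of
  Oriented Edge-Coloring((V,E),D,h), p its palette size, and t its (expected) running time,
  where a base-case call on an n'-vertex m'-edge graph of arboricity a' costs at most
  Bnd n' m' a', and the splitting plus recombination at a node with edge set E costs at
  most cs * |E|.\<close>
inductive oriented_edge_coloring ::
  "(nat \<Rightarrow> nat \<Rightarrow> nat \<Rightarrow> real) \<Rightarrow> real \<Rightarrow> 'a set \<Rightarrow> 'a set set \<Rightarrow> ('a \<times> 'a) set
    \<Rightarrow> nat \<Rightarrow> ('a set \<Rightarrow> nat) \<Rightarrow> nat \<Rightarrow> real \<Rightarrow> bool"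
  for Bnd cs where
  base: "proper_edge_coloring E \<phi> (max_degree V E + 1) \<Longrightarrow>
         t \<le> Bnd (card V) (card E) (arboricity V E) \<Longrightarrow>
         oriented_edge_coloring Bnd cs V E D 0 \<phi> (max_degree V E + 1) t"
| step: "oriented_splitting V E D E1 E2 1 \<Longrightarrow>
         oriented_edge_coloring Bnd cs V E1 (restrict_orient D E1) h \<phi>1 p1 t1 \<Longrightarrow>
         oriented_edge_coloring Bnd cs V E2 (restrict_orient D E2) h \<phi>2 p2 t2 \<Longrightarrow>
         t \<le> t1 + t2 + cs * real (card E) \<Longrightarrow>
         oriented_edge_coloring Bnd cs V E D (Suc h)
           (\<lambda>e. if e \<in> E1 then \<phi>1 e else p1 + \<phi>2 e) (p1 + p2) t"

definition arboricity_edge_coloring ::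
  "(nat \<Rightarrow> nat \<Rightarrow> nat \<Rightarrow> real) \<Rightarrow> real \<Rightarrow> real \<Rightarrow> 'a set \<Rightarrow> 'a set set
    \<Rightarrow> nat \<Rightarrow> ('a set \<Rightarrow> nat) \<Rightarrow> real \<Rightarrow> bool" where
  "arboricity_edge_coloring Bnd cs co V E h \<phi> t \<longleftrightarrow>
     (\<exists>D p t'. forests_decomposition_orientation V E D \<and>
        oriented_edge_coloring Bnd cs V E D h \<phi> p t' \<and>
        t \<le> t' + co * real (card E))"

end

theory Submission
  imports Defs
begin


lemma in_set_sub: "\<forall>e\<in>F. e \<subseteq> V \<Longrightarrow> {u. (u, v) \<in> D \<and> {u, v} \<in> F} \<subseteq> V"
  by auto
lemma out_set_sub: "\<forall>e\<in>F. e \<subseteq> V \<Longrightarrow> {w. (v, w) \<in> D \<and> {v, w} \<in> F} \<subseteq> V"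
  by auto

lemma fin_in: "finite V \<Longrightarrow> \<forall>e\<in>F. e \<subseteq> V \<Longrightarrow> finite {u. (u, v) \<in> D \<and> {u, v} \<in> F}"
  by (rule finite_subset[OF in_set_sub]) auto
lemma fin_out: "finite V \<Longrightarrow> \<forall>e\<in>F. e \<subseteq> V \<Longrightarrow> finite {w. (v, w) \<in> D \<and> {v, w} \<in> F}"
  by (rule finite_subset[OF out_set_sub]) auto

lemma indeg_split:
  assumes "finite V" "\<forall>e\<in>F. e \<subseteq> V" "E1 \<union> E2 = F" "E1 \<inter> E2 = {}"
  shows "indeg_in D E1 v + indeg_in D E2 v = indeg_in D F v"
proof -
  have "{u. (u, v) \<in> D \<and> {u, v} \<in> F} = {u. (u, v) \<in> D \<and> {u, v} \<in> E1} \<union> {u. (u, v) \<in> D \<and> {u, v} \<in> E2}"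
    using assms by auto
  moreover have "finite {u. (u, v) \<in> D \<and> {u, v} \<in> E1}" "finite {u. (u, v) \<in> D \<and> {u, v} \<in> E2}"
    using assms by (auto intro!: fin_in fin_out)
  moreover have "{u. (u, v) \<in> D \<and> {u, v} \<in> E1} \<inter> {u. (u, v) \<in> D \<and> {u, v} \<in> E2} = {}"
    using assms by auto
  ultimately show ?thesis unfolding indeg_in_def by (simp add: card_Un_disjoint)
qed

lemma outdeg_split:
  assumes "finite V" "\<forall>e\<in>F. e \<subseteq> V" "E1 \<union> E2 = F" "E1 \<inter> E2 = {}"
  shows "outdeg_in D E1 v + outdeg_in D E2 v = outdeg_in D F v"
proof -
  have "{u. (v, u) \<in> D \<and> {v, u} \<in> F} = {u. (v, u) \<in> D \<and> {v, u} \<in> E1} \<union> {u. (v, u) \<in> D \<and> {v, u} \<in> E2}"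
    using assms by auto
  moreover have "finite {u. (v, u) \<in> D \<and> {v, u} \<in> E1}" "finite {u. (v, u) \<in> D \<and> {v, u} \<in> E2}"
    using assms by (auto intro!: fin_in fin_out)
  moreover have "{u. (v, u) \<in> D \<and> {v, u} \<in> E1} \<inter> {u. (v, u) \<in> D \<and> {v, u} \<in> E2} = {}"
    using assms by auto
  ultimately show ?thesis unfolding outdeg_in_def by (simp add: card_Un_disjoint)
qed

lemma indeg_restrict: "indeg_in (restrict_orient D E1) E1 v = indeg_in D E1 v"
  unfolding indeg_in_def restrict_orient_def by simp
lemma outdeg_restrict: "outdeg_in (restrict_orient D E1) E1 v = outdeg_in D E1 v"
  unfolding outdeg_in_def restrict_orient_def by simp

lemma degree_le_in_out:
  assumes "finite V" "\<forall>e\<in>F. e \<subseteq> V" "\<forall>e\<in>F. \<exists>a b. (a, b) \<in> D \<and> {a, b} = e"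
  shows "degree F v \<le> indeg_in D F v + outdeg_in D F v"
proof -
  let ?I = "{u. (u, v) \<in> D \<and> {u, v} \<in> F}" and ?O = "{w. (v, w) \<in> D \<and> {v, w} \<in> F}"
  have "{e \<in> F. v \<in> e} \<subseteq> (\<lambda>u. {u, v}) ` ?I \<union> (\<lambda>w. {v, w}) ` ?O"
  proof
    fix e assume "e \<in> {e \<in> F. v \<in> e}"
    then have e: "e \<in> F" "v \<in> e" by auto
    then obtain a b where ab: "(a, b) \<in> D" "{a, b} = e" using assms(3) by blast
    show "e \<in> (\<lambda>u. {u, v}) ` ?I \<union> (\<lambda>w. {v, w}) ` ?O"
    proof (cases "a = v")
      case True then show ?thesis using ab e by auto
    next
      case False then have "b = v" using ab e by auto
      then show ?thesis using ab e by auto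
    qed
  qed
  moreover have "finite ?I" "finite ?O" using assms by (auto intro!: fin_in fin_out)
  ultimately have "card {e \<in> F. v \<in> e} \<le> card ((\<lambda>u. {u, v}) ` ?I \<union> (\<lambda>w. {v, w}) ` ?O)"
    by (intro card_mono) auto
  also have "\<dots> \<le> card ((\<lambda>u. {u, v}) ` ?I) + card ((\<lambda>w. {v, w}) ` ?O)" by (rule card_Un_le)
  also have "\<dots> \<le> card ?I + card ?O" by (intro add_mono card_image_le) fact+
  finally show ?thesis unfolding degree_def indeg_in_def outdeg_in_def .
qed



lemma arb_set_finite: "finite V \<Longrightarrow> finite {nat \<lceil>real (card (induced_edges E S)) / real (card S - 1)\<rceil> | S. S \<subseteq> V \<and> card S \<ge> 2}"
proof -
  assume "finite V"
  have "{nat \<lceil>real (card (induced_edges E S)) / real (card S - 1)\<rceil> | S. S \<subseteq> V \<and> card S \<ge> 2}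
     \<subseteq> (\<lambda>S. nat \<lceil>real (card (induced_edges E S)) / real (card S - 1)\<rceil>) ` Pow V" by auto
  then show ?thesis by (rule finite_subset) (simp add: \<open>finite V\<close>)
qed

lemma ceil_div_le:
  assumes "(c::nat) \<le> d * k" "k > 0"
  shows "nat \<lceil>real c / real k\<rceil> \<le> d"
proof -
  have "real c \<le> real d * real k" using assms(1) by (metis of_nat_le_iff of_nat_mult)
  then have "real c / real k \<le> real d" using assms(2) by (simp add: divide_le_eq)
  then have "\<lceil>real c / real k\<rceil> \<le> int d" using ceiling_le_iff[of "real c / real k" "int d"] by simp
  then show ?thesis by (simp only: nat_le_iff)
qed

lemma le_ceil_div:
  assumes "nat \<lceil>real c / real k\<rceil> \<le> a" "k > 0"
  shows "real c \<le> real a * real k"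
proof -
  have "real c / real k \<le> of_int \<lceil>real c / real k\<rceil>" by (rule le_of_int_ceiling)
  also have "\<dots> \<le> real a" using assms(1) by linarith
  finally show ?thesis using assms(2) by (simp add: divide_le_eq)
qed

lemma arb_le:
  assumes "finite V" "\<And>S. S \<subseteq> V \<Longrightarrow> 2 \<le> card S \<Longrightarrow> card (induced_edges F S) \<le> d * (card S - 1)"
  shows "arboricity V F \<le> d"
  unfolding arboricity_def
proof (rule Max.boundedI)
  show "finite (insert 0 {nat \<lceil>real (card (induced_edges F S)) / real (card S - 1)\<rceil> | S. S \<subseteq> V \<and> card S \<ge> 2})"
    using arb_set_finite[OF assms(1)] by simp
  show "insert 0 {nat \<lceil>real (card (induced_edges F S)) / real (card S - 1)\<rceil> | S. S \<subseteq> V \<and> card S \<ge> 2} \<noteq> {}" by blast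
  fix a assume "a \<in> insert 0 {nat \<lceil>real (card (induced_edges F S)) / real (card S - 1)\<rceil> | S. S \<subseteq> V \<and> card S \<ge> 2}"
    then consider "a = 0" | S where "S \<subseteq> V" "card S \<ge> 2" "a = nat \<lceil>real (card (induced_edges F S)) / real (card S - 1)\<rceil>" by auto
    then show "a \<le> d"
    proof cases
      case 2
      have "card S - 1 > 0" using 2 by simp
      then show ?thesis unfolding 2(3) by (rule ceil_div_le[OF assms(2)[OF 2(1,2)]])
    next
      case 1 then show ?thesis by simp
    qed
qed

lemma arb_ge:
  assumes "finite V" "S \<subseteq> V" "2 \<le> card S"
  shows "real (card (induced_edges E S)) \<le> real (arboricity V E) * (real (card S) - 1)"
proof -
  have "nat \<lceil>real (card (induced_edges E S)) / real (card S - 1)\<rceil> \<le> arboricity V E"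
    unfolding arboricity_def
  proof (rule Max_ge)
    show "finite (insert 0 {nat \<lceil>real (card (induced_edges E S)) / real (card S - 1)\<rceil> | S. S \<subseteq> V \<and> card S \<ge> 2})"
      using arb_set_finite[OF assms(1)] by simp
    show "nat \<lceil>real (card (induced_edges E S)) / real (card S - 1)\<rceil> \<in> insert 0 {nat \<lceil>real (card (induced_edges E S)) / real (card S - 1)\<rceil> | S. S \<subseteq> V \<and> card S \<ge> 2}"
      using assms by blast
  qed
  from le_ceil_div[OF this] assms(3) show ?thesis by (simp add: of_nat_diff)
qed

lemma arb_le_card:
  assumes "finite V" "finite F" "\<forall>e\<in>F. e \<subseteq> V"
  shows "arboricity V F \<le> card F"
proof (rule arb_le[OF assms(1)])
  fix S assume "S \<subseteq> V" "2 \<le> card S"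
  have "card (induced_edges F S) \<le> card F" unfolding induced_edges_def using assms(2) by (intro card_mono) auto
  also have "\<dots> = card F * 1" by simp
  also have "\<dots> \<le> card F * (card S - 1)" using \<open>2 \<le> card S\<close> by (intro mult_le_mono2) simp
  finally show "card (induced_edges F S) \<le> card F * (card S - 1)" .
qed

lemma leaf_arb:
  fixes r :: "'a \<Rightarrow> nat"
  assumes "finite V" "\<forall>e\<in>F. e \<subseteq> V" "\<forall>e\<in>F. \<exists>a b. (a, b) \<in> D \<and> {a, b} = e"
    "\<forall>(a, b)\<in>D. r a < r b" "\<forall>v\<in>V. outdeg_in D F v \<le> d" "S \<subseteq> V" "2 \<le> card S"
  shows "card (induced_edges F S) \<le> d * (card S - 1)"
proof -
  have finS: "finite S" using assms(1,6) finite_subset by blast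
  have "S \<noteq> {}" using assms(7) by auto
  then have "Max (r ` S) \<in> r ` S" using finS by (intro Max_in) auto
  then obtain w where w: "w \<in> S" "r w = Max (r ` S)" by (metis imageE)
  have wmax: "\<forall>x\<in>S. r x \<le> r w" using w finS by simp
  let ?A = "\<lambda>a. (\<lambda>b. {a, b}) ` {b. (a, b) \<in> D \<and> {a, b} \<in> F}"
  have "induced_edges F S \<subseteq> (\<Union>a\<in>S - {w}. ?A a)"
  proof
    fix e assume "e \<in> induced_edges F S"
    then have e: "e \<in> F" "e \<subseteq> S" unfolding induced_edges_def by auto
    then obtain a b where ab: "(a, b) \<in> D" "{a, b} = e" using assms(3) by blast
    have "r a < r b" using ab assms(4) by auto
    moreover have "r b \<le> r w" using wmax ab e by auto
    ultimately have "a \<noteq> w" by auto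
    then show "e \<in> (\<Union>a\<in>S - {w}. ?A a)" using ab e by auto
  qed
  have "card (induced_edges F S) \<le> card (\<Union>a\<in>S - {w}. ?A a)"
  proof (rule card_mono[OF _ \<open>induced_edges F S \<subseteq> _\<close>])
    have "finite (?A a)" for a using fin_out[OF assms(1,2)] by blast
    then show "finite (\<Union>a\<in>S - {w}. ?A a)" using finS by blast
  qed
  also have "\<dots> \<le> (\<Sum>a\<in>S - {w}. card (?A a))" using finS by (intro card_UN_le) simp
  also have "\<dots> \<le> (\<Sum>a\<in>S - {w}. d)"
  proof (rule sum_mono)
    fix a assume a: "a \<in> S - {w}"
    have "card (?A a) \<le> outdeg_in D F a" unfolding outdeg_in_def by (rule card_image_le) (use assms in \<open>auto intro!: fin_out\<close>)
    also have "\<dots> \<le> d" using assms(5,6) a by auto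
    finally show "card (?A a) \<le> d" .
  qed
  also have "\<dots> = d * (card S - 1)" using w finS by simp
  finally show ?thesis .
qed



lemma max_degree_le:
  assumes "finite V" "\<forall>v\<in>V. real (degree F v) \<le> X" "X \<ge> 0"
  shows "real (max_degree V F) \<le> X"
proof -
  have "max_degree V F \<in> insert 0 (degree F ` V)" unfolding max_degree_def
    using assms(1) by (intro Max_in) auto
  then show ?thesis using assms by auto
qed

lemma half_bound:
  assumes "\<bar>int a - int b\<bar> \<le> int 1" "a + b = c"
  shows "2 * real a \<le> real c + 1"
  using assms by linarith

lemma lin_helper: "(a::real) \<le> (X+2)/2 - 2 + 3*z \<Longrightarrow> b \<le> (X+2)/2 - 2 + 3*z \<Longrightarrow> a + b \<le> X - 2 + 3*(2*z)"
  by (simp add: field_simps)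

lemma time_helper:
  fixes t t1 t2 c f K e1 e2 w C h :: real
  assumes "t \<le> t1 + t2 + c * f" "t1 \<le> K * e1 * w + C * h * e1" "t2 \<le> K * e2 * w + C * h * e2"
    "c \<le> C" "f \<ge> 0" "e1 + e2 = f"
  shows "t \<le> K * f * w + C * (h + 1) * f"
proof -
  have "c * f \<le> C * f" using assms(4,5) by (rule mult_right_mono)
  moreover have "K * f * w + C * (h + 1) * f = (K * e1 * w + C * h * e1) + (K * e2 * w + C * h * e2) + C * f"
    using assms(6) by (simp add: algebra_simps flip: assms(6))
  ultimately show ?thesis using assms(1-3) by linarith
qed

lemma main:
  fixes r :: "'a \<Rightarrow> nat"
  assumes "oriented_edge_coloring Bnd cs V F D h \<phi> p t"
  shows "finite V \<Longrightarrow> \<forall>e\<in>F. e \<subseteq> V \<Longrightarrow> \<forall>e\<in>F. \<exists>a b. (a, b) \<in> D \<and> {a, b} = e \<Longrightarrow> \<forall>(a, b)\<in>D. r a < r b \<Longrightarrow>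
    proper_edge_coloring F \<phi> p \<and>
    (\<forall>X\<ge>0. (\<forall>v\<in>V. real (indeg_in D F v + outdeg_in D F v) \<le> X) \<longrightarrow> real p \<le> X - 2 + 3 * 2 ^ h) \<and>
    (\<forall>Y K. Y \<ge> 0 \<longrightarrow> K \<ge> 0 \<longrightarrow> (\<forall>v\<in>V. real (outdeg_in D F v) \<le> Y) \<longrightarrow>
        (\<forall>m a. Bnd (card V) m a \<le> K * real m * real a ^ q) \<longrightarrow>
        t \<le> K * real (card F) * (1 + (Y - 1) / 2 ^ h) ^ q + \<bar>cs\<bar> * real h * real (card F))"
  using assms
proof (induction rule: oriented_edge_coloring.induct)
  case (base F \<phi> V t D)
  note fin = base.prems(1) and sub = base.prems(2) and cov = base.prems(3) and acyc = base.prems(4)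
  have part2: "real (max_degree V F + 1) \<le> X - 2 + 3 * 2 ^ 0"
    if "X \<ge> 0" "\<forall>v\<in>V. real (indeg_in D F v + outdeg_in D F v) \<le> X" for X
  proof -
    have "\<forall>v\<in>V. real (degree F v) \<le> X"
      using degree_le_in_out[OF fin sub cov] that(2) by (meson of_nat_le_iff order_trans)
    from max_degree_le[OF fin this that(1)] show ?thesis by simp
  qed
  have part3: "t \<le> K * real (card F) * (1 + (Y - 1) / 2 ^ 0) ^ q + \<bar>cs\<bar> * real 0 * real (card F)"
    if "Y \<ge> 0" "K \<ge> 0" "\<forall>v\<in>V. real (outdeg_in D F v) \<le> Y"
       "\<forall>m a. Bnd (card V) m a \<le> K * real m * real a ^ q" for Y K
  proof -
    have "\<forall>v\<in>V. outdeg_in D F v \<le> nat \<lfloor>Y\<rfloor>" using that(3) by (auto simp: le_nat_floor)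
    then have "arboricity V F \<le> nat \<lfloor>Y\<rfloor>"
      using leaf_arb[OF fin sub cov acyc] by (intro arb_le[OF fin]) auto
    then have "real (arboricity V F) \<le> Y" using that(1) by linarith
    then have "real (arboricity V F) ^ q \<le> Y ^ q" by (intro power_mono) auto
    then have "K * real (card F) * real (arboricity V F) ^ q \<le> K * real (card F) * Y ^ q"
      using that(2) by (intro mult_left_mono) auto
    then show ?thesis using base.hyps(2) that(4)[rule_format, of "card F" "arboricity V F"] by simp
  qed
  show ?case using base.hyps(1) part2 part3 by auto
next
  case (step V F D E1 E2 h \<phi>1 p1 t1 \<phi>2 p2 t2 t)
  note fin = step.prems(1) and sub = step.prems(2) and cov = step.prems(3) and acyc = step.prems(4)
  have spl: "E1 \<union> E2 = F" "E1 \<inter> E2 = {}"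
    and disc: "\<forall>v\<in>V. \<bar>int (indeg_in D E1 v) - int (indeg_in D E2 v)\<bar> \<le> int 1 \<and>
             \<bar>int (outdeg_in D E1 v) - int (outdeg_in D E2 v)\<bar> \<le> int 1"
    using step.hyps(1) unfolding oriented_splitting_def by auto
  have finF: "finite F" using fin sub by (intro finite_subset[of F "Pow V"]) auto
  have cov1: "\<forall>e\<in>E1. \<exists>a b. (a, b) \<in> restrict_orient D E1 \<and> {a, b} = e"
  proof
    fix e assume e: "e \<in> E1"
    then have "e \<in> F" using spl by auto
    then obtain a b where "(a, b) \<in> D" "{a, b} = e" using cov by blast
    then show "\<exists>a b. (a, b) \<in> restrict_orient D E1 \<and> {a, b} = e" using e unfolding restrict_orient_def by auto
  qed
  have cov2: "\<forall>e\<in>E2. \<exists>a b. (a, b) \<in> restrict_orient D E2 \<and> {a, b} = e"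
  proof
    fix e assume e: "e \<in> E2"
    then have "e \<in> F" using spl by auto
    then obtain a b where "(a, b) \<in> D" "{a, b} = e" using cov by blast
    then show "\<exists>a b. (a, b) \<in> restrict_orient D E2 \<and> {a, b} = e" using e unfolding restrict_orient_def by auto
  qed
  have ac1: "\<forall>(a, b)\<in>restrict_orient D E1. r a < r b" using acyc unfolding restrict_orient_def by auto
  have ac2: "\<forall>(a, b)\<in>restrict_orient D E2. r a < r b" using acyc unfolding restrict_orient_def by auto
  note IH1 = step.IH(1)[OF fin _ cov1 ac1] and IH2 = step.IH(2)[OF fin _ cov2 ac2]
  have sub1: "\<forall>e\<in>E1. e \<subseteq> V" and sub2: "\<forall>e\<in>E2. e \<subseteq> V" using sub spl by auto
  have IH1': "proper_edge_coloring E1 \<phi>1 p1 \<and>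
    (\<forall>X\<ge>0. (\<forall>v\<in>V. real (indeg_in D E1 v + outdeg_in D E1 v) \<le> X) \<longrightarrow> real p1 \<le> X - 2 + 3 * 2 ^ h) \<and>
    (\<forall>Y K. Y \<ge> 0 \<longrightarrow> K \<ge> 0 \<longrightarrow> (\<forall>v\<in>V. real (outdeg_in D E1 v) \<le> Y) \<longrightarrow>
        (\<forall>m a. Bnd (card V) m a \<le> K * real m * real a ^ q) \<longrightarrow>
        t1 \<le> K * real (card E1) * (1 + (Y - 1) / 2 ^ h) ^ q + \<bar>cs\<bar> * real h * real (card E1))"
    using IH1[OF sub1] unfolding indeg_restrict outdeg_restrict .
  have IH2': "proper_edge_coloring E2 \<phi>2 p2 \<and>
    (\<forall>X\<ge>0. (\<forall>v\<in>V. real (indeg_in D E2 v + outdeg_in D E2 v) \<le> X) \<longrightarrow> real p2 \<le> X - 2 + 3 * 2 ^ h) \<and>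
    (\<forall>Y K. Y \<ge> 0 \<longrightarrow> K \<ge> 0 \<longrightarrow> (\<forall>v\<in>V. real (outdeg_in D E2 v) \<le> Y) \<longrightarrow>
        (\<forall>m a. Bnd (card V) m a \<le> K * real m * real a ^ q) \<longrightarrow>
        t2 \<le> K * real (card E2) * (1 + (Y - 1) / 2 ^ h) ^ q + \<bar>cs\<bar> * real h * real (card E2))"
    using IH2[OF sub2] unfolding indeg_restrict outdeg_restrict .
  note R1 = IH1'[THEN conjunct1] and P1 = IH1'[THEN conjunct2, THEN conjunct1]
    and T1 = IH1'[THEN conjunct2, THEN conjunct2]
  note R2 = IH2'[THEN conjunct1] and P2 = IH2'[THEN conjunct2, THEN conjunct1]
    and T2 = IH2'[THEN conjunct2, THEN conjunct2]
  have in1: "2 * real (indeg_in D E1 v) \<le> real (indeg_in D F v) + 1"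
   and in2: "2 * real (indeg_in D E2 v) \<le> real (indeg_in D F v) + 1"
   and out1: "2 * real (outdeg_in D E1 v) \<le> real (outdeg_in D F v) + 1"
   and out2: "2 * real (outdeg_in D E2 v) \<le> real (outdeg_in D F v) + 1" if "v \<in> V" for v
  proof -
    have a: "indeg_in D E1 v + indeg_in D E2 v = indeg_in D F v" by (rule indeg_split[OF fin sub spl])
    have b: "outdeg_in D E1 v + outdeg_in D E2 v = outdeg_in D F v" by (rule outdeg_split[OF fin sub spl])
    have c: "\<bar>int (indeg_in D E1 v) - int (indeg_in D E2 v)\<bar> \<le> 1" "\<bar>int (outdeg_in D E1 v) - int (outdeg_in D E2 v)\<bar> \<le> 1"
      using disc that by auto
    from a b c show "2 * real (indeg_in D E1 v) \<le> real (indeg_in D F v) + 1"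
      "2 * real (indeg_in D E2 v) \<le> real (indeg_in D F v) + 1"
      "2 * real (outdeg_in D E1 v) \<le> real (outdeg_in D F v) + 1"
      "2 * real (outdeg_in D E2 v) \<le> real (outdeg_in D F v) + 1" by linarith+
  qed
  have cardF: "card E1 + card E2 = card F"
    using spl finF card_Un_disjoint[of E1 E2] by (metis finite_Un)
  have r1a: "\<And>e. e \<in> E1 \<Longrightarrow> 1 \<le> \<phi>1 e \<and> \<phi>1 e \<le> p1"
    using R1 unfolding proper_edge_coloring_def by auto
  have r2a: "\<And>e. e \<in> E2 \<Longrightarrow> 1 \<le> \<phi>2 e \<and> \<phi>2 e \<le> p2"
    using R2 unfolding proper_edge_coloring_def by auto
  have r1b: "\<And>e1 e2. e1 \<in> E1 \<Longrightarrow> e2 \<in> E1 \<Longrightarrow> e1 \<noteq> e2 \<Longrightarrow> e1 \<inter> e2 \<noteq> {} \<Longrightarrow> \<phi>1 e1 \<noteq> \<phi>1 e2"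
    using R1 unfolding proper_edge_coloring_def by blast
  have r2b: "\<And>e1 e2. e1 \<in> E2 \<Longrightarrow> e2 \<in> E2 \<Longrightarrow> e1 \<noteq> e2 \<Longrightarrow> e1 \<inter> e2 \<noteq> {} \<Longrightarrow> \<phi>2 e1 \<noteq> \<phi>2 e2"
    using R2 unfolding proper_edge_coloring_def by blast
  have inE2: "\<And>e. e \<in> F \<Longrightarrow> e \<notin> E1 \<Longrightarrow> e \<in> E2" using spl by blast
  have part1: "proper_edge_coloring F (\<lambda>e. if e \<in> E1 then \<phi>1 e else p1 + \<phi>2 e) (p1 + p2)"
    unfolding proper_edge_coloring_def
  proof (intro conjI ballI impI)
    fix e assume e: "e \<in> F"
    show "(if e \<in> E1 then \<phi>1 e else p1 + \<phi>2 e) \<in> {1..p1 + p2}"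
    proof (cases "e \<in> E1")
      case True then show ?thesis using r1a[OF True] by simp
    next
      case False then show ?thesis using r2a[OF inE2[OF e False]] by simp
    qed
  next
    fix e1 e2 assume e1: "e1 \<in> F" and e2: "e2 \<in> F" and e: "e1 \<noteq> e2 \<and> e1 \<inter> e2 \<noteq> {}"
    show "(if e1 \<in> E1 then \<phi>1 e1 else p1 + \<phi>2 e1) \<noteq> (if e2 \<in> E1 then \<phi>1 e2 else p1 + \<phi>2 e2)"
    proof (cases "e1 \<in> E1")
      case T1: True
      show ?thesis
      proof (cases "e2 \<in> E1")
        case True then show ?thesis using T1 r1b[OF T1 True] e by simp
      next
        case False then show ?thesis using T1 r1a[OF T1] r2a[OF inE2[OF e2 False]] by simp
      qed
    next
      case F1: False
      show ?thesis
      proof (cases "e2 \<in> E1")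
        case True then show ?thesis using F1 r1a[OF True] r2a[OF inE2[OF e1 F1]] by simp
      next
        case False then show ?thesis using F1 r2b[OF inE2[OF e1 F1] inE2[OF e2 False]] e by simp
      qed
    qed
  qed
  have part2: "real (p1 + p2) \<le> X - 2 + 3 * 2 ^ Suc h"
    if X: "X \<ge> 0" "\<forall>v\<in>V. real (indeg_in D F v + outdeg_in D F v) \<le> X" for X
  proof -
    have A1: "\<forall>v\<in>V. real (indeg_in D E1 v + outdeg_in D E1 v) \<le> (X + 2) / 2"
    proof
      fix v assume v: "v \<in> V"
      from in1[OF v] out1[OF v] X(2) v show "real (indeg_in D E1 v + outdeg_in D E1 v) \<le> (X + 2) / 2" by auto
    qed
    have A2: "\<forall>v\<in>V. real (indeg_in D E2 v + outdeg_in D E2 v) \<le> (X + 2) / 2"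
    proof
      fix v assume v: "v \<in> V"
      from in2[OF v] out2[OF v] X(2) v show "real (indeg_in D E2 v + outdeg_in D E2 v) \<le> (X + 2) / 2" by auto
    qed
    have X0: "(X + 2) / 2 \<ge> 0" using X by simp
    have "real p1 \<le> (X + 2) / 2 - 2 + 3 * 2 ^ h" using P1 A1 X0 by blast
    moreover have "real p2 \<le> (X + 2) / 2 - 2 + 3 * 2 ^ h" using P2 A2 X0 by blast
    ultimately have "real p1 + real p2 \<le> X - 2 + 3 * (2 * 2 ^ h)" by (rule lin_helper)
    then show ?thesis by simp
  qed
  have part3: "t \<le> K * real (card F) * (1 + (Y - 1) / 2 ^ Suc h) ^ q + \<bar>cs\<bar> * real (Suc h) * real (card F)"
    if Y: "Y \<ge> 0" "K \<ge> 0" "\<forall>v\<in>V. real (outdeg_in D F v) \<le> Y"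
       "\<forall>m a. Bnd (card V) m a \<le> K * real m * real a ^ q" for Y K
  proof -
    have eq: "1 + ((Y + 1) / 2 - 1) / 2 ^ h = 1 + (Y - 1) / 2 ^ Suc h" by (simp add: field_simps)
    have B1: "\<forall>v\<in>V. real (outdeg_in D E1 v) \<le> (Y + 1) / 2"
    proof
      fix v assume v: "v \<in> V"
      from out1[OF v] Y(3) v show "real (outdeg_in D E1 v) \<le> (Y + 1) / 2" by auto
    qed
    have B2: "\<forall>v\<in>V. real (outdeg_in D E2 v) \<le> (Y + 1) / 2"
    proof
      fix v assume v: "v \<in> V"
      from out2[OF v] Y(3) v show "real (outdeg_in D E2 v) \<le> (Y + 1) / 2" by auto
    qed
    have Y0: "(Y + 1) / 2 \<ge> 0" using Y by simp
    have "t1 \<le> K * real (card E1) * (1 + ((Y + 1) / 2 - 1) / 2 ^ h) ^ q + \<bar>cs\<bar> * real h * real (card E1)"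
      using T1 B1 Y0 Y(2) Y(4) by blast
    then have t1: "t1 \<le> K * real (card E1) * (1 + (Y - 1) / 2 ^ Suc h) ^ q + \<bar>cs\<bar> * real h * real (card E1)"
      unfolding eq .
    have "t2 \<le> K * real (card E2) * (1 + ((Y + 1) / 2 - 1) / 2 ^ h) ^ q + \<bar>cs\<bar> * real h * real (card E2)"
      using T2 B2 Y0 Y(2) Y(4) by blast
    then have t2: "t2 \<le> K * real (card E2) * (1 + (Y - 1) / 2 ^ Suc h) ^ q + \<bar>cs\<bar> * real h * real (card E2)"
      unfolding eq .
    have ce: "real (card E1) + real (card E2) = real (card F)" using cardF by (metis of_nat_add)
    have "real (Suc h) = real h + 1" by simp
    then show ?thesis using time_helper[OF step.hyps(4) t1 t2 abs_ge_self _ ce] by (simp add: add.commute)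
  qed
  show ?case using part1 part2 part3 by blast
qed



lemma sg_facts:
  assumes "simple_graph V E"
  shows "finite V" "\<forall>e\<in>E. e \<subseteq> V" "finite E" "\<forall>e\<in>E. card e = 2"
proof -
  show fV: "finite V" using assms unfolding simple_graph_def by auto
  show sub: "\<forall>e\<in>E. e \<subseteq> V" using assms unfolding simple_graph_def by auto
  show "finite E" using fV sub by (intro finite_subset[of E "Pow V"]) auto
  show "\<forall>e\<in>E. card e = 2" using assms unfolding simple_graph_def by auto
qed

lemma handshake:
  assumes "finite S" "finite A" "\<forall>e\<in>A. e \<subseteq> S \<and> card e = 2"
  shows "(\<Sum>u\<in>S. card {e \<in> A. u \<in> e}) = 2 * card A"
proof -
  have "(\<Sum>u\<in>S. card {e \<in> A. u \<in> e}) = (\<Sum>u\<in>S. \<Sum>e\<in>A. (of_bool (u \<in> e) :: nat))"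
  proof (rule sum.cong)
    fix u show "card {e \<in> A. u \<in> e} = (\<Sum>e\<in>A. (of_bool (u \<in> e) :: nat))"
      using assms(2) by (simp add: Int_def conj_commute)
  qed simp
  also have "\<dots> = (\<Sum>e\<in>A. \<Sum>u\<in>S. (of_bool (u \<in> e) :: nat))" by (rule sum.swap)
  also have "\<dots> = (\<Sum>e\<in>A. 2)"
  proof (rule sum.cong)
    fix e assume "e \<in> A"
    then have "S \<inter> {u. u \<in> e} = e" using assms(3) by auto
    then show "(\<Sum>u\<in>S. (of_bool (u \<in> e) :: nat)) = 2" using assms(1,3) \<open>e \<in> A\<close> by simp
  qed simp
  finally show ?thesis by simp
qed

lemma root:
  fixes V :: "'a set"
  assumes sg: "simple_graph V E" and fdo: "forests_decomposition_orientation V E D"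
  shows "\<exists>r :: 'a \<Rightarrow> nat. (\<forall>e\<in>E. \<exists>a b. (a, b) \<in> D \<and> {a, b} = e) \<and> (\<forall>(a, b)\<in>D. r a < r b) \<and>
     (\<forall>v\<in>V. indeg_in D E v + outdeg_in D E v \<le> degree E v) \<and>
     (\<forall>v\<in>V. real (outdeg_in D E v) \<le> 2 * real (arboricity V E))"
proof -
  obtain vs where dvs: "distinct vs" and svs: "set vs = V"
    and mind: "\<forall>i < length vs. \<forall>u \<in> set (drop i vs).
           degree (induced_edges E (set (drop i vs))) (vs ! i)
             \<le> degree (induced_edges E (set (drop i vs))) u"
    and Ddef: "D = {(vs ! i, vs ! j) | i j. i < j \<and> j < length vs \<and> {vs ! i, vs ! j} \<in> E}"
    using fdo unfolding forests_decomposition_orientation_def by blast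
  note sgf = sg_facts[OF sg]
  define r where "r x = (THE i. i < length vs \<and> vs ! i = x)" for x
  have rnth: "r (vs ! i) = i" if "i < length vs" for i
    unfolding r_def using that dvs by (auto intro!: the_equality simp: nth_eq_iff_index_eq)
  have cov: "\<forall>e\<in>E. \<exists>a b. (a, b) \<in> D \<and> {a, b} = e"
  proof
    fix e assume e: "e \<in> E"
    then obtain u v where uv: "e = {u, v}" "u \<noteq> v" "u \<in> V" "v \<in> V"
      using sg unfolding simple_graph_def by blast
    obtain i where i: "i < length vs" "vs ! i = u" using uv svs by (metis in_set_conv_nth)
    obtain j where j: "j < length vs" "vs ! j = v" using uv svs by (metis in_set_conv_nth)
    have "i \<noteq> j" using i j uv by auto
    then consider "i < j" | "j < i" by linarith
    then show "\<exists>a b. (a, b) \<in> D \<and> {a, b} = e"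
    proof cases
      case 1 then have "(u, v) \<in> D" using i j e uv unfolding Ddef by blast
      then show ?thesis using uv by blast
    next
      case 2
      have "{vs ! j, vs ! i} \<in> E" using e uv i j by (simp add: insert_commute)
      then have "(v, u) \<in> D" using i j 2 unfolding Ddef by blast
      then show ?thesis using uv by (auto simp: insert_commute)
    qed
  qed
  have acyc: "\<forall>(a, b)\<in>D. r a < r b" unfolding Ddef using rnth by auto
  have R1: "\<forall>v\<in>V. indeg_in D E v + outdeg_in D E v \<le> degree E v"
  proof
    fix v assume v: "v \<in> V"
    let ?I = "{u. (u, v) \<in> D \<and> {u, v} \<in> E}" and ?O = "{w. (v, w) \<in> D \<and> {v, w} \<in> E}"
    have fI: "finite ?I" and fO: "finite ?O" using sgf by (auto intro!: fin_in fin_out)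
    have disj: "?I \<inter> ?O = {}"
    proof (rule ccontr)
      assume "?I \<inter> ?O \<noteq> {}"
      then obtain u where "(u, v) \<in> D" "(v, u) \<in> D" by blast
      then have "r u < r v" "r v < r u" using acyc by auto
      then show False by simp
    qed
    have inj: "inj_on (\<lambda>x. {x, v}) (?I \<union> ?O)" by (rule inj_onI) (auto simp: doubleton_eq_iff)
    have img: "(\<lambda>x. {x, v}) ` (?I \<union> ?O) \<subseteq> {e \<in> E. v \<in> e}" by (auto simp: insert_commute)
    have "indeg_in D E v + outdeg_in D E v = card (?I \<union> ?O)"
      unfolding indeg_in_def outdeg_in_def using fI fO disj by (simp add: card_Un_disjoint)
    also have "\<dots> = card ((\<lambda>x. {x, v}) ` (?I \<union> ?O))" using inj by (simp add: card_image)
    also have "\<dots> \<le> card {e \<in> E. v \<in> e}" using img sgf(3) by (intro card_mono) auto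
    finally show "indeg_in D E v + outdeg_in D E v \<le> degree E v" unfolding degree_def .
  qed
  have R2: "\<forall>v\<in>V. real (outdeg_in D E v) \<le> 2 * real (arboricity V E)"
  proof
    fix v assume v: "v \<in> V"
    obtain i where i: "i < length vs" "vs ! i = v" using v svs by (metis in_set_conv_nth)
    define S where "S = set (drop i vs)"
    define ES where "ES = induced_edges E S"
    have vS: "v \<in> S" unfolding S_def using i by (metis Cons_nth_drop_Suc list.set_intros(1))
    have SV: "S \<subseteq> V" unfolding S_def using svs by (metis set_drop_subset)
    have fS: "finite S" unfolding S_def by simp
    have fES: "finite ES" unfolding ES_def induced_edges_def using sgf(3) by simp
    let ?O = "{w. (v, w) \<in> D \<and> {v, w} \<in> E}"
    have fO: "finite ?O" using sgf by (auto intro!: fin_out)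
    have OS: "?O \<subseteq> S"
    proof
      fix w assume "w \<in> ?O"
      then obtain i' j where ij: "v = vs ! i'" "w = vs ! j" "i' < j" "j < length vs" unfolding Ddef by blast
      have "i' < length vs" using ij by simp
      then have "i' = i" using ij i dvs nth_eq_iff_index_eq by metis
      then have "drop i vs ! (j - i) = vs ! j" "j - i < length (drop i vs)" using ij by auto
      then show "w \<in> S" unfolding S_def using ij by (metis nth_mem)
    qed
    have deg_le: "outdeg_in D E v \<le> degree ES v"
    proof -
      have inj: "inj_on (\<lambda>w. {v, w}) ?O" by (rule inj_onI) (auto simp: doubleton_eq_iff)
      have "(\<lambda>w. {v, w}) ` ?O \<subseteq> {e \<in> ES. v \<in> e}" using OS vS unfolding ES_def induced_edges_def by auto
      then have "card ((\<lambda>w. {v, w}) ` ?O) \<le> card {e \<in> ES. v \<in> e}" using fES by (intro card_mono) auto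
      then show ?thesis unfolding outdeg_in_def degree_def using inj by (simp add: card_image)
    qed
    have mind': "\<forall>u\<in>S. degree ES v \<le> degree ES u" using mind i unfolding S_def ES_def by metis
    have "card S * degree ES v = (\<Sum>u\<in>S. degree ES v)" by simp
    also have "\<dots> \<le> (\<Sum>u\<in>S. degree ES u)" using mind' by (intro sum_mono) auto
    also have "\<dots> = 2 * card ES" unfolding degree_def
      using handshake[OF fS fES] sgf(4) unfolding ES_def induced_edges_def by auto
    finally have hs: "card S * degree ES v \<le> 2 * card ES" .
    have cES: "real (card ES) \<le> real (arboricity V E) * (real (card S) - 1)"
    proof (cases "card S \<ge> 2")
      case True then show ?thesis unfolding ES_def by (rule arb_ge[OF sgf(1) SV])
    next
      case False
      have "card S \<noteq> 0" using fS vS by auto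
      then have "card S = 1" using False by linarith
      then obtain x where "S = {x}" by (metis card_1_singletonE)
      have "ES = {}"
      proof (rule ccontr)
        assume "ES \<noteq> {}" then obtain e where "e \<in> ES" by blast
        then have "e \<subseteq> {x}" "card e = 2" using \<open>S = {x}\<close> sgf(4) unfolding ES_def induced_edges_def by auto
        then have "card e \<le> card {x}" by (intro card_mono) auto
        then show False using \<open>card e = 2\<close> by simp
      qed
      then show ?thesis using \<open>card S = 1\<close> by simp
    qed
    have "card S \<noteq> 0" using fS vS by auto
    then have cS: "real (card S) \<ge> 1" by simp
    have "real (card S * degree ES v) \<le> real (2 * card ES)" using hs by (simp only: of_nat_le_iff)
    then have "real (card S) * real (degree ES v) \<le> 2 * real (card ES)" by simp
    also have "\<dots> \<le> 2 * (real (arboricity V E) * (real (card S) - 1))" using cES by simp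
    finally have "real (card S) * real (degree ES v) \<le> 2 * (real (arboricity V E) * (real (card S) - 1))" .
    also have "\<dots> \<le> real (card S) * (2 * real (arboricity V E))" by (simp add: algebra_simps)
    finally have "real (degree ES v) \<le> 2 * real (arboricity V E)" using cS by (simp add: mult_le_cancel_left)
    moreover have "real (outdeg_in D E v) \<le> real (degree ES v)" using deg_le by simp
    ultimately show "real (outdeg_in D E v) \<le> 2 * real (arboricity V E)" by linarith
  qed
  show ?thesis using cov acyc R1 R2 by blast
qed



lemma final_generic:
  fixes V :: "'a set" and q :: nat and \<epsilon> :: real
  assumes sg: "simple_graph V E" and eps1: "1 / real (arboricity V E) \<le> \<epsilon>" and eps2: "\<epsilon> < 1"
    and hdef: "h = nat (max \<lfloor>log 2 (\<epsilon> * real (arboricity V E) / 3)\<rfloor> 0)"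
    and Bdef: "\<forall>n m a. B n m a = cb * real m * real a ^ q * log 2 (real n)"
    and aec: "arboricity_edge_coloring B cs co V E h \<phi> t"
  shows "(\<exists>k. real k \<le> real (max_degree V E) + \<epsilon> * real (arboricity V E) \<and> proper_edge_coloring E \<phi> k) \<and>
         t \<le> (\<bar>cb\<bar> * 13 ^ q + 2 * \<bar>cs\<bar> + \<bar>co\<bar>) * real (card E) * log 2 (real (card V)) / \<epsilon> ^ q"
proof -
  obtain D p t' where fdo: "forests_decomposition_orientation V E D"
    and oec: "oriented_edge_coloring B cs V E D h \<phi> p t'" and tt: "t \<le> t' + co * real (card E)"
    using aec unfolding arboricity_edge_coloring_def by blast
  note sgf = sg_facts[OF sg]
  obtain r :: "'a \<Rightarrow> nat" where cov: "\<forall>e\<in>E. \<exists>a b. (a, b) \<in> D \<and> {a, b} = e"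
    and acyc: "\<forall>(a, b)\<in>D. r a < r b"
    and R1: "\<forall>v\<in>V. indeg_in D E v + outdeg_in D E v \<le> degree E v"
    and R2: "\<forall>v\<in>V. real (outdeg_in D E v) \<le> 2 * real (arboricity V E)"
    using root[OF sg fdo] by blast
  note M = main[where r = r and q = q, OF oec sgf(1) sgf(2) cov acyc]
  define \<alpha> where "\<alpha> = arboricity V E"
  define \<Delta> where "\<Delta> = max_degree V E"
  define m where "m = card E"
  define L where "L = log 2 (real (card V))"
  define K where "K = \<bar>cb\<bar> * \<bar>L\<bar>"
  define Z where "Z = 1 + (2 * real \<alpha> - 1) / 2 ^ h"
  have K0: "K \<ge> 0" unfolding K_def by simp
  have Bb: "\<forall>m a. B (card V) m a \<le> K * real m * real a ^ q"
  proof (intro allI)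
    fix m' a
    have "B (card V) m' a = cb * real m' * real a ^ q * L" using Bdef unfolding L_def by simp
    also have "\<dots> \<le> \<bar>cb * real m' * real a ^ q * L\<bar>" by (rule abs_ge_self)
    also have "\<dots> = K * real m' * real a ^ q" unfolding K_def by (simp add: abs_mult)
    finally show "B (card V) m' a \<le> K * real m' * real a ^ q" .
  qed
  have Tb: "t' \<le> K * real m * Z ^ q + \<bar>cs\<bar> * real h * real m"
    using M[THEN conjunct2, THEN conjunct2] K0 R2 Bb unfolding Z_def m_def \<alpha>_def
    by (smt (verit) of_nat_0_le_iff)
  have Dl: "\<forall>v\<in>V. real (indeg_in D E v + outdeg_in D E v) \<le> real \<Delta>"
  proof
    fix v assume v: "v \<in> V"
    have "degree E v \<le> \<Delta>" unfolding \<Delta>_def max_degree_def using v sgf(1) by (intro Max_ge) auto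
    then show "real (indeg_in D E v + outdeg_in D E v) \<le> real \<Delta>" using R1 v by (meson of_nat_le_iff order_trans)
  qed
  have Pb: "real p \<le> real \<Delta> - 2 + 3 * 2 ^ h"
    using M[THEN conjunct2, THEN conjunct1] Dl by simp
  have pcol: "proper_edge_coloring E \<phi> p" using M by blast
  have ea0: "\<epsilon> * real \<alpha> \<ge> 0"
  proof (cases "\<alpha> = 0")
    case False
    then have "1 / real \<alpha> > 0" by simp
    then have "\<epsilon> > 0" using eps1 unfolding \<alpha>_def by linarith
    then show ?thesis by simp
  qed simp
  show ?thesis
  proof (cases "E = {}")
    case True
    have c1: "proper_edge_coloring E \<phi> 0" using True by (simp add: proper_edge_coloring_def)
    have "real 0 \<le> real \<Delta> + \<epsilon> * real \<alpha>" using ea0 by simp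
    then have part1: "\<exists>k. real k \<le> real (max_degree V E) + \<epsilon> * real (arboricity V E) \<and> proper_edge_coloring E \<phi> k"
      using c1 unfolding \<Delta>_def \<alpha>_def by blast
    have "m = 0" unfolding m_def using True by simp
    then have "t \<le> 0" using Tb tt unfolding m_def by simp
    then show ?thesis using part1 True by simp
  next
    case False
    then obtain e where e: "e \<in> E" by blast
    have e2: "card e = 2" "e \<subseteq> V" using e sgf by auto
    have "induced_edges E e \<noteq> {}" using e unfolding induced_edges_def by auto
    moreover have "finite (induced_edges E e)" using sgf(3) unfolding induced_edges_def by simp
    ultimately have "card (induced_edges E e) \<ge> 1" by (simp add: Suc_le_eq card_gt_0_iff)
    moreover have "real (card (induced_edges E e)) \<le> real \<alpha> * (real (card e) - 1)"
      unfolding \<alpha>_def by (rule arb_ge[OF sgf(1) e2(2)]) (simp add: e2(1))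
    ultimately have a1: "real \<alpha> \<ge> 1" using e2(1) by simp
    have epos: "\<epsilon> > 0" using eps1 a1 unfolding \<alpha>_def
      by (smt (verit) divide_pos_pos)
    have ea1: "\<epsilon> * real \<alpha> \<ge> 1" using eps1 a1 unfolding \<alpha>_def by (simp add: divide_le_eq mult.commute)
    have n2: "card V \<ge> 2" using e2 sgf(1) card_mono by metis
    have L1: "L \<ge> 1"
    proof -
      have "log 2 (real 2) \<le> log 2 (real (card V))" using n2 by (subst log_le_cancel_iff) auto
      then show ?thesis unfolding L_def by simp
    qed
    define lg where "lg = log 2 (\<epsilon> * real \<alpha> / 3)"
    have hh: "(2::real) ^ h \<le> max 1 (\<epsilon> * real \<alpha> / 3) \<and> real \<Delta> - 2 + 3 * 2 ^ h \<le> real \<Delta> + \<epsilon> * real \<alpha> \<and> Z \<le> 13 / \<epsilon>"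
    proof (cases "\<epsilon> * real \<alpha> \<ge> 3")
      case True
      have pos: "\<epsilon> * real \<alpha> / 3 > 0" using True by simp
      have lg0: "lg \<ge> 0" unfolding lg_def using True by simp
      have hf: "real h = of_int \<lfloor>lg\<rfloor>" using hdef lg0 unfolding lg_def \<alpha>_def by simp
      have p1: "(2::real) ^ h = 2 powr (real h)" by (simp add: powr_realpow)
      have "2 powr (real h) \<le> 2 powr lg" using hf by simp
      also have "\<dots> = \<epsilon> * real \<alpha> / 3" unfolding lg_def using pos by simp
      finally have u: "(2::real) ^ h \<le> \<epsilon> * real \<alpha> / 3" using p1 by simp
      have "lg < real h + 1" using hf by linarith
      then have "2 powr lg < 2 powr (real h + 1)" by simp
      then have "\<epsilon> * real \<alpha> / 3 < 2 * 2 ^ h" unfolding lg_def using pos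
        by (simp add: powr_add powr_realpow)
      then have lo: "\<epsilon> * real \<alpha> / 6 < 2 ^ h" by simp
      have "Z \<le> 1 + 2 * real \<alpha> / 2 ^ h" unfolding Z_def by (simp add: divide_right_mono)
      also have "2 * real \<alpha> / 2 ^ h \<le> 2 * real \<alpha> / (\<epsilon> * real \<alpha> / 6)"
        using lo a1 epos by (intro divide_left_mono) auto
      also have "2 * real \<alpha> / (\<epsilon> * real \<alpha> / 6) = 12 / \<epsilon>" using a1 epos by (simp add: field_simps)
      also have "1 + 12 / \<epsilon> \<le> 13 / \<epsilon>" using epos eps2 by (simp add: field_simps)
      finally show ?thesis using u by simp
    next
      case False
      then have "lg < 0" unfolding lg_def using ea1 by (simp add: log_less_zero_cancel_iff)
      then have h0: "h = 0" using hdef unfolding lg_def \<alpha>_def by simp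
      have "Z = 2 * real \<alpha>" unfolding Z_def h0 by simp
      also have "\<dots> \<le> 13 / \<epsilon>" using False epos by (simp add: field_simps)
      finally show ?thesis using h0 ea1 by simp
    qed
    have part1: "\<exists>k. real k \<le> real (max_degree V E) + \<epsilon> * real (arboricity V E) \<and> proper_edge_coloring E \<phi> k"
      using Pb hh pcol unfolding \<Delta>_def \<alpha>_def by (meson order_trans)
    have Z0: "Z \<ge> 0" unfolding Z_def using a1 by simp
    define w where "w = 1 / \<epsilon> ^ q"
    have w1: "w \<ge> 1" unfolding w_def using epos eps2 by (simp add: power_le_one)
    have Zq: "Z ^ q \<le> 13 ^ q * w"
    proof -
      have "Z ^ q \<le> (13 / \<epsilon>) ^ q" using Z0 hh by (intro power_mono) auto
      then show ?thesis unfolding w_def by (simp add: power_divide)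
    qed
    have "\<epsilon> * real \<alpha> \<le> 1 * real \<alpha>" using eps2 a1 by (intro mult_right_mono) auto
    then have "max 1 (\<epsilon> * real \<alpha> / 3) \<le> real \<alpha>" using a1 by simp
    then have "(2::real) ^ h \<le> real \<alpha>" using hh by linarith
    also have "real \<alpha> \<le> real m" unfolding \<alpha>_def m_def using arb_le_card[OF sgf(1) sgf(3) sgf(2)] by simp
    also have "real m \<le> real (card V) ^ 2"
    proof -
      have "E \<subseteq> (\<lambda>(a, b). {a, b}) ` (V \<times> V)" using sg unfolding simple_graph_def by auto
      then have "card E \<le> card (V \<times> V)" using sgf(1) by (meson card_image_le finite_SigmaI card_mono finite_imageI order_trans)
      then have "card E \<le> card V * card V" by (simp add: card_cartesian_product)
      then have "real (card E) \<le> real (card V * card V)" by (simp only: of_nat_le_iff)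
      then show ?thesis unfolding m_def by (simp add: power2_eq_square)
    qed
    finally have "(2::real) ^ h \<le> real (card V) ^ 2" .
    then have "log 2 ((2::real) ^ h) \<le> log 2 (real (card V) ^ 2)" using n2 by (subst log_le_cancel_iff) auto
    then have hL: "real h \<le> 2 * L" unfolding L_def using n2 by (simp add: log_nat_power)
    have m0: "real m \<ge> 0" by simp
    have a1': "K * real m * Z ^ q \<le> \<bar>cb\<bar> * 13 ^ q * real m * L * w"
    proof -
      have "K * real m * Z ^ q = \<bar>cb\<bar> * L * real m * Z ^ q" unfolding K_def using L1 by simp
      also have "\<dots> \<le> \<bar>cb\<bar> * L * real m * (13 ^ q * w)" using Zq L1 by (intro mult_left_mono) auto
      finally show ?thesis by (simp add: algebra_simps)
    qed
    have a2: "\<bar>cs\<bar> * real h * real m \<le> 2 * \<bar>cs\<bar> * real m * L * w"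
    proof -
      have "2 * L * 1 \<le> 2 * L * w" using w1 L1 by (intro mult_left_mono) auto
      then have "real h \<le> 2 * L * w" using hL by simp
      then have "\<bar>cs\<bar> * real m * real h \<le> \<bar>cs\<bar> * real m * (2 * L * w)" by (intro mult_left_mono) auto
      then show ?thesis by (simp add: algebra_simps)
    qed
    have a3: "co * real m \<le> \<bar>co\<bar> * real m * L * w"
    proof -
      have "1 \<le> L * w" using L1 w1 by (metis mult_mono' mult_1 zero_le_one)
      then have "\<bar>co\<bar> * real m * 1 \<le> \<bar>co\<bar> * real m * (L * w)" by (intro mult_left_mono) auto
      moreover have "co * real m \<le> \<bar>co\<bar> * real m" by (intro mult_right_mono) auto
      ultimately show ?thesis by (simp add: algebra_simps)
    qed
    have "t \<le> \<bar>cb\<bar> * 13 ^ q * real m * L * w + 2 * \<bar>cs\<bar> * real m * L * w + \<bar>co\<bar> * real m * L * w"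
      using tt Tb a1' a2 a3 unfolding m_def by linarith
    also have "\<dots> = (\<bar>cb\<bar> * 13 ^ q + 2 * \<bar>cs\<bar> + \<bar>co\<bar>) * real m * L / \<epsilon> ^ q"
      unfolding w_def using epos by (simp add: field_simps add_divide_distrib[symmetric])
    finally show ?thesis using part1 unfolding m_def L_def by simp
  qed
qed


theorem theorem4p16:
  shows "\<forall>cb cs co :: real.
    (\<exists>C. \<forall>(V :: nat set) E (\<epsilon> :: real) h \<phi> t.
        simple_graph V E \<longrightarrow>
        1 / real (arboricity V E) \<le> \<epsilon> \<longrightarrow> \<epsilon> < 1 \<longrightarrow>
        h = nat (max \<lfloor>log 2 (\<epsilon> * real (arboricity V E) / 3)\<rfloor> 0) \<longrightarrow>
        arboricity_edge_coloring
          (\<lambda>n' m' a'. cb * real m' * real a' ^ 7 * log 2 (real n')) cs co V E h \<phi> t \<longrightarrow>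
        (\<exists>k. real k \<le> real (max_degree V E) + \<epsilon> * real (arboricity V E) \<and>
             proper_edge_coloring E \<phi> k) \<and>
        t \<le> C * real (card E) * log 2 (real (card V)) / \<epsilon> ^ 7)
  \<and> (\<exists>C. \<forall>(V :: nat set) E (\<epsilon> :: real) h \<phi> t.
        simple_graph V E \<longrightarrow>
        1 / real (arboricity V E) \<le> \<epsilon> \<longrightarrow> \<epsilon> < 1 \<longrightarrow>
        h = nat (max \<lfloor>log 2 (\<epsilon> * real (arboricity V E) / 3)\<rfloor> 0) \<longrightarrow>
        arboricity_edge_coloring
          (\<lambda>n' m' a'. cb * real m' * real a' * log 2 (real n')) cs co V E h \<phi> t \<longrightarrow>
        (\<exists>k. real k \<le> real (max_degree V E) + \<epsilon> * real (arboricity V E) \<and>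
             proper_edge_coloring E \<phi> k) \<and>
        t \<le> C * real (card E) * log 2 (real (card V)) / \<epsilon>)"
  proof (intro allI conjI)
  fix cb cs co :: real
  show "\<exists>C. \<forall>(V :: nat set) E (\<epsilon> :: real) h \<phi> t.
        simple_graph V E \<longrightarrow>
        1 / real (arboricity V E) \<le> \<epsilon> \<longrightarrow> \<epsilon> < 1 \<longrightarrow>
        h = nat (max \<lfloor>log 2 (\<epsilon> * real (arboricity V E) / 3)\<rfloor> 0) \<longrightarrow>
        arboricity_edge_coloring
          (\<lambda>n' m' a'. cb * real m' * real a' ^ 7 * log 2 (real n')) cs co V E h \<phi> t \<longrightarrow>
        (\<exists>k. real k \<le> real (max_degree V E) + \<epsilon> * real (arboricity V E) \<and>
             proper_edge_coloring E \<phi> k) \<and>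
        t \<le> C * real (card E) * log 2 (real (card V)) / \<epsilon> ^ 7"
  proof (intro exI allI impI)
    fix V :: "nat set" and E \<epsilon> h \<phi> t
    assume a: "simple_graph V E" "1 / real (arboricity V E) \<le> \<epsilon>" "\<epsilon> < 1"
      "h = nat (max \<lfloor>log 2 (\<epsilon> * real (arboricity V E) / 3)\<rfloor> 0)"
      "arboricity_edge_coloring (\<lambda>n' m' a'. cb * real m' * real a' ^ 7 * log 2 (real n')) cs co V E h \<phi> t"
    show "(\<exists>k. real k \<le> real (max_degree V E) + \<epsilon> * real (arboricity V E) \<and>
             proper_edge_coloring E \<phi> k) \<and>
        t \<le> (\<bar>cb\<bar> * 13 ^ 7 + 2 * \<bar>cs\<bar> + \<bar>co\<bar>) * real (card E) * log 2 (real (card V)) / \<epsilon> ^ 7"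
      by (rule final_generic[OF a(1-4) _ a(5)]) simp
  qed
next
  fix cb cs co :: real
  show "\<exists>C. \<forall>(V :: nat set) E (\<epsilon> :: real) h \<phi> t.
        simple_graph V E \<longrightarrow>
        1 / real (arboricity V E) \<le> \<epsilon> \<longrightarrow> \<epsilon> < 1 \<longrightarrow>
        h = nat (max \<lfloor>log 2 (\<epsilon> * real (arboricity V E) / 3)\<rfloor> 0) \<longrightarrow>
        arboricity_edge_coloring
          (\<lambda>n' m' a'. cb * real m' * real a' * log 2 (real n')) cs co V E h \<phi> t \<longrightarrow>
        (\<exists>k. real k \<le> real (max_degree V E) + \<epsilon> * real (arboricity V E) \<and>
             proper_edge_coloring E \<phi> k) \<and>
        t \<le> C * real (card E) * log 2 (real (card V)) / \<epsilon>"
  proof (intro exI allI impI)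
    fix V :: "nat set" and E \<epsilon> h \<phi> t
    assume a: "simple_graph V E" "1 / real (arboricity V E) \<le> \<epsilon>" "\<epsilon> < 1"
      "h = nat (max \<lfloor>log 2 (\<epsilon> * real (arboricity V E) / 3)\<rfloor> 0)"
      "arboricity_edge_coloring (\<lambda>n' m' a'. cb * real m' * real a' * log 2 (real n')) cs co V E h \<phi> t"
    have "(\<exists>k. real k \<le> real (max_degree V E) + \<epsilon> * real (arboricity V E) \<and>
             proper_edge_coloring E \<phi> k) \<and>
        t \<le> (\<bar>cb\<bar> * 13 ^ 1 + 2 * \<bar>cs\<bar> + \<bar>co\<bar>) * real (card E) * log 2 (real (card V)) / \<epsilon> ^ 1"
      by (rule final_generic[OF a(1-4) _ a(5)]) simp
    then show "(\<exists>k. real k \<le> real (max_degree V E) + \<epsilon> * real (arboricity V E) \<and>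
             proper_edge_coloring E \<phi> k) \<and>
        t \<le> (\<bar>cb\<bar> * 13 + 2 * \<bar>cs\<bar> + \<bar>co\<bar>) * real (card E) * log 2 (real (card V)) / \<epsilon>"
      by simp
  qed
qed

end
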